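(* For all $k\in\mathbb{N}$, the vector $c^{(k)}\in\mathbb{R}^{2^k-1}$ satisfies $\sum_{j} c^{(k)}_j=2(\rho^k-1)$ and $c^{(k)}\ge\pi^{(k)}$ entrywise.
   Context: $\rho=1+\sqrt{2}$. The silver stepsizes are $\alpha_t=\rho^{\nu(t+1)-1}+1$ for $t\ge0$, where $\nu(i)$ is the largest integer $j$ with $2^j\mid i$. For $k\in\mathbb{N}$ and $n=2^k-1$, $\pi^{(k)}=[\alpha_0,\dots,\alpha_{n-1}]\in\mathbb{R}^n$ (so $\pi^{(k+1)}=[\pi^{(k)},\rho^{k-1}+1,\pi^{(k)}]$ and $\sum\pi^{(k)}=\rho^k-1$). The sequence $c^{(k)}\in\mathbb{R}^n$ is defined recursively by $c^{(1)}=[2(\rho-1)]$ and $c^{(k+1)}=\big[\pi^{(k)},\ (1+\rho^{-k})(\rho^{k-1}+1),\ \rho c^{(k)}-(\rho-1-\rho^{-k})\pi^{(k)}\big]$ (concatenation). *)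

theory Defs
  imports Complex_Main
begin

definition silver_rho :: real where
  "silver_rho = 1 + sqrt 2"

text \<open>nu i: largest j with 2^j dividing i (used for i >= 1).\<close>
definition nu :: "nat \<Rightarrow> nat" where
  "nu i = (GREATEST j. (2::nat) ^ j dvd i)"

definition silver_alpha :: "nat \<Rightarrow> real" where
  "silver_alpha t = silver_rho powi (int (nu (t + 1)) - 1) + 1"

definition silver_pi :: "nat \<Rightarrow> real list" where
  "silver_pi k = map silver_alpha [0..<2 ^ k - 1]"

text \<open>c^(k), defined for k >= 1; the value at k = 0 is an unused placeholder.\<close>
fun silver_c :: "nat \<Rightarrow> real list" where
  "silver_c 0 = []"
| "silver_c (Suc 0) = [2 * (silver_rho - 1)]"
| "silver_c (Suc (Suc k)) =
     silver_pi (Suc k)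
     @ [(1 + inverse (silver_rho ^ Suc k)) * (silver_rho ^ k + 1)]
     @ map2 (\<lambda>x p. silver_rho * x - (silver_rho - 1 - inverse (silver_rho ^ Suc k)) * p)
            (silver_c (Suc k)) (silver_pi (Suc k))"

end

theory Submission
  imports Defs
begin

lemma rho_pos: "silver_rho > 0" by (simp add: silver_rho_def add_pos_nonneg)
lemma rho_ge1: "silver_rho \<ge> 1" by (simp add: silver_rho_def)
lemma rho_sq: "silver_rho ^ 2 = 2 * silver_rho + 1"
  by (simp add: silver_rho_def power2_eq_square algebra_simps)
lemma rho_inv: "inverse silver_rho = silver_rho - 2"
proof -
  have "silver_rho * (silver_rho - 2) = 1" using rho_sq by (simp add: power2_eq_square algebra_simps)
  thus ?thesis using rho_pos by (metis inverse_unique)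
qed

lemma nu_char:
  assumes "i > 0" "2 ^ j dvd i" "\<not> 2 ^ Suc j dvd i"
  shows "nu i = j"
  unfolding nu_def
proof (rule Greatest_equality)
  show "2 ^ j dvd i" by fact
  fix y assume y: "(2::nat) ^ y dvd i"
  show "y \<le> j"
  proof (rule ccontr)
    assume "\<not> y \<le> j"
    hence "Suc j \<le> y" by simp
    hence "(2::nat) ^ Suc j dvd 2 ^ y" by (rule le_imp_power_dvd)
    with y assms(3) show False using dvd_trans by blast
  qed
qed

lemma nu_props:
  assumes "i > 0"
  shows "2 ^ nu i dvd i" "\<not> 2 ^ Suc (nu i) dvd i"
proof -
  have bnd: "\<forall>y. (2::nat) ^ y dvd i \<longrightarrow> y \<le> i"
  proof (intro allI impI)
    fix y assume "(2::nat) ^ y dvd i"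
    hence "2 ^ y \<le> i" using assms by (simp add: dvd_imp_le)
    moreover have "y < (2::nat) ^ y" by (rule less_exp)
    ultimately show "y \<le> i" by linarith
  qed
  have ex: "(2::nat) ^ 0 dvd i" by simp
  show 1: "2 ^ nu i dvd i" unfolding nu_def
    by (rule GreatestI_nat[where P="\<lambda>j. (2::nat) ^ j dvd i", OF ex]) (use bnd in blast)
  show "\<not> 2 ^ Suc (nu i) dvd i"
  proof
    assume "2 ^ Suc (nu i) dvd i"
    hence "Suc (nu i) \<le> nu i" unfolding nu_def
      by (rule Greatest_le_nat) (use bnd in blast)
    thus False by simp
  qed
qed

lemma nu_pow: "nu (2 ^ k) = k"
  by (rule nu_char) auto

lemma nu_shift:
  assumes "0 < m" "m < 2 ^ k"
  shows "nu (2 ^ k + m) = nu m"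
proof -
  note p = nu_props[OF assms(1)]
  have "2 ^ nu m \<le> m" using p(1) assms(1) by (simp add: dvd_imp_le)
  hence "(2::nat) ^ nu m < 2 ^ k" using assms(2) by linarith
  hence lt: "nu m < k" by simp
  have d1: "(2::nat) ^ nu m dvd 2 ^ k" "(2::nat) ^ Suc (nu m) dvd 2 ^ k"
    using lt by (intro le_imp_power_dvd; simp)+
  show ?thesis
  proof (rule nu_char)
    show "2 ^ nu m dvd 2 ^ k + m" using d1(1) p(1) by simp
    show "\<not> 2 ^ Suc (nu m) dvd 2 ^ k + m" using d1(2) p(2) by (simp add: dvd_add_right_iff)
  qed simp
qed

lemma pi_len: "length (silver_pi k) = 2 ^ k - 1"
  by (simp add: silver_pi_def)

lemma pi_nth: "t < 2 ^ k - 1 \<Longrightarrow> silver_pi k ! t = silver_alpha t"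
  by (simp add: silver_pi_def)

lemma alpha_pos: "silver_alpha t > 0"
  using rho_pos by (simp add: silver_alpha_def add_pos_nonneg)

lemma pi_Suc: "silver_pi (Suc k) = silver_pi k @ [silver_rho powi (int k - 1) + 1] @ silver_pi k"
proof (rule nth_equalityI)
  have "(2::nat) ^ k \<ge> 1" by simp
  then show "length (silver_pi (Suc k)) = length (silver_pi k @ [silver_rho powi (int k - 1) + 1] @ silver_pi k)"
    by (simp add: pi_len)
  fix i assume "i < length (silver_pi (Suc k))"
  hence i: "i < 2 * 2 ^ k - 1" by (simp add: pi_len)
  have pk: "(2::nat) ^ k \<ge> 1" by simp
  consider "i < 2 ^ k - 1" | "i = 2 ^ k - 1" | "i > 2 ^ k - 1" by linarith
  then show "silver_pi (Suc k) ! i = (silver_pi k @ [silver_rho powi (int k - 1) + 1] @ silver_pi k) ! i"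
  proof cases
    case 1 thus ?thesis using i by (simp add: pi_nth nth_append pi_len)
  next
    case 2
    have "silver_pi (Suc k) ! i = silver_alpha (2 ^ k - 1)" using i 2 by (simp add: pi_nth)
    also have "\<dots> = silver_rho powi (int k - 1) + 1"
      using pk by (simp add: silver_alpha_def nu_pow)
    finally show ?thesis using 2 by (simp add: nth_append pi_len)
  next
    case 3
    define s where "s = i - 2 ^ k"
    have ieq: "i = 2 ^ k + s" using 3 pk unfolding s_def by linarith
    have s: "s < 2 ^ k - 1" using i ieq by simp
    have "silver_pi (Suc k) ! i = silver_alpha i" using i by (simp add: pi_nth)
    also have "\<dots> = silver_alpha s"
      unfolding silver_alpha_def using nu_shift[of "s+1" k] s ieq by simp
    also have "\<dots> = (silver_pi k @ [silver_rho powi (int k - 1) + 1] @ silver_pi k) ! i"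
      using s ieq 3 pk by (simp add: nth_append pi_len pi_nth)
    finally show ?thesis .
  qed
qed

lemma pi_one: "silver_pi (Suc 0) = [inverse silver_rho + 1]"
  by (simp add: silver_pi_def silver_alpha_def nu_pow[of 0, simplified] power_int_minus)

lemma pi_sum: "sum_list (silver_pi (Suc n)) = silver_rho ^ Suc n - 1"
proof (induction n)
  case 0 thus ?case by (simp add: pi_one rho_inv)
next
  case (Suc n)
  have "silver_rho ^ Suc (Suc n) = (silver_rho * silver_rho) * silver_rho ^ n" by simp
  also have "\<dots> = 2 * silver_rho ^ Suc n + silver_rho ^ n"
    using rho_sq by (simp add: power2_eq_square algebra_simps)
  finally have "silver_rho ^ Suc (Suc n) = 2 * silver_rho ^ Suc n + silver_rho ^ n" .
  thus ?case using Suc by (simp add: pi_Suc[of "Suc n"])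
qed

lemma sum_map2:
  "length cs = length ps \<Longrightarrow> sum_list (map2 (\<lambda>x p. (a::real) * x - b * p) cs ps) = a * sum_list cs - b * sum_list ps"
  by (induction cs ps rule: list_induct2) (auto simp: algebra_simps)

lemma all2_map2:
  assumes "list_all2 (\<le>) ps cs" "\<forall>p\<in>set ps. p \<ge> 0" "(a::real) \<ge> 1" "b \<le> a - 1"
  shows "list_all2 (\<le>) ps (map2 (\<lambda>x p. a * x - b * p) cs ps)"
  using assms(1,2)
proof (induction ps cs rule: list_all2_induct)
  case Nil thus ?case by simp
next
  case (Cons p ps c cs)
  have "p \<le> a * c - b * p"
  proof -
    have "(a - 1) * p \<ge> b * p" using Cons assms by (simp add: mult_right_mono)
    moreover have "a * c \<ge> a * p" using Cons assms by (simp add: mult_left_mono)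
    ultimately show ?thesis by (simp add: algebra_simps)
  qed
  thus ?case using Cons by simp
qed

lemma main:
  "length (silver_c (Suc n)) = 2 ^ Suc n - 1
    \<and> sum_list (silver_c (Suc n)) = 2 * (silver_rho ^ Suc n - 1)
    \<and> list_all2 (\<le>) (silver_pi (Suc n)) (silver_c (Suc n))"
proof (induction n)
  case 0
  have "inverse silver_rho + 1 \<le> 2 * (silver_rho - 1)" using rho_inv rho_ge1 by simp
  thus ?case by (simp add: pi_one)
next
  case (Suc n)
  let ?r = silver_rho
  let ?P = "silver_pi (Suc n)" and ?C = "silver_c (Suc n)"
  have len: "length ?C = length ?P" using Suc by (simp add: pi_len)
  have ppos: "\<forall>p\<in>set ?P. p \<ge> 0" using alpha_pos by (auto simp: silver_pi_def less_imp_le)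
  have ip: "inverse (?r ^ Suc n) > 0" using rho_pos by simp
  have pw: "?r powi (int (Suc n) - 1) = ?r ^ n" by simp
  have l1: "length (silver_c (Suc (Suc n))) = 2 ^ Suc (Suc n) - 1"
  proof -
    have "(2::nat) ^ n \<ge> 1" by simp
    thus ?thesis using Suc len by (simp add: pi_len)
  qed
  have l2: "sum_list (silver_c (Suc (Suc n))) = 2 * (?r ^ Suc (Suc n) - 1)"
  proof -
    define x where "x = ?r ^ n"
    define e where "e = inverse (?r ^ Suc n)"
    have ex: "e * ?r * x = 1" unfolding e_def x_def using rho_pos by (simp add: field_simps)
    have ex2: "e * x = ?r - 2"
    proof -
      have "e * x = inverse ?r" unfolding e_def x_def using rho_pos by (simp add: field_simps)
      thus ?thesis using rho_inv by simp
    qed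
    have r2: "?r * ?r = 2 * ?r + 1" using rho_sq by (simp add: power2_eq_square)
    have "sum_list (silver_c (Suc (Suc n))) =
      (?r * x - 1) + (1 + e) * (x + 1) + ?r * (2 * (?r * x - 1)) - (?r - 1 - e) * (?r * x - 1)"
      using Suc len by (simp add: sum_map2 pi_sum x_def e_def)
    also have "\<dots> = 2 * (?r * ?r * x - 1)"
    proof -
      have "(?r * x - 1) + (1 + e) * (x + 1) + ?r * (2 * (?r * x - 1)) - (?r - 1 - e) * (?r * x - 1)
        = (?r * x - 1) + x + 1 + (e * x) + e + 2 * (?r * ?r) * x - 2 * ?r - ?r * ?r * x + ?r
          + x * ?r - 1 + (e * ?r * x) - e"
        by (simp add: algebra_simps)
      also have "\<dots> = 2 * (?r * ?r * x - 1)" unfolding ex ex2 r2 by (simp add: algebra_simps)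
      finally show ?thesis .
    qed
    finally show ?thesis by (simp add: x_def)
  qed
  have l3: "list_all2 (\<le>) (silver_pi (Suc (Suc n))) (silver_c (Suc (Suc n)))"
  proof -
    have a: "list_all2 (\<le>) ?P ?P" by (simp add: list_all2_refl)
    have b: "?r ^ n + 1 \<le> (1 + inverse (?r ^ Suc n)) * (?r ^ n + 1)"
    proof -
      have "0 \<le> inverse (?r ^ Suc n) * (?r ^ n + 1)" using ip rho_pos by simp
      thus ?thesis by (simp add: algebra_simps)
    qed
    have c: "list_all2 (\<le>) ?P (map2 (\<lambda>x p. ?r * x - (?r - 1 - inverse (?r ^ Suc n)) * p) ?C ?P)"
      by (rule all2_map2) (use Suc ppos rho_ge1 ip in auto)
    show ?thesis
      unfolding pi_Suc[of "Suc n"] silver_c.simps(3) pw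
      by (intro list_all2_appendI) (use a b c in auto)
  qed
  show ?case using l1 l2 l3 by blast
qed

theorem lemma8:
  fixes k :: nat
  assumes "k \<ge> 1"
  shows "length (silver_c k) = 2 ^ k - 1
    \<and> sum_list (silver_c k) = 2 * (silver_rho ^ k - 1)
    \<and> length (silver_pi k) = 2 ^ k - 1
    \<and> (\<forall>j < 2 ^ k - 1. silver_c k ! j \<ge> silver_pi k ! j)"
proof -
  obtain n where k: "k = Suc n" using assms by (cases k) auto
  note m = main[of n]
  have "\<forall>j < 2 ^ k - 1. silver_c k ! j \<ge> silver_pi k ! j"
    using m k list_all2_nthD[of "(\<le>)" "silver_pi k" "silver_c k"] by (simp add: pi_len)
  thus ?thesis using m k by (simp add: pi_len)
qed

end
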